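(* Let $\mathbb{F}\in\{\mathbb{R},\mathbb{C}\}$, $A\in\mathbb{F}^{m\times n}$ with $\|A\|_{\infty,col}\le1$, $x_0\in\mathbb{F}^n$ with $S=\mathrm{supp}\,x_0$ and $\#S=K$, $\epsilon\in\mathbb{F}^m$, $b=Ax_0+\epsilon$, and assume $\beta_K>0$. If $$|x_{0,j}|>\Big(1+\frac{1}{\beta_K}\Big)\|\epsilon\|_2\quad\text{for all }j\in S,$$ then the oracle solution $x'=x_S$ is a strict local minimizer of $\mathcal{K}_{K,reg}$ with $\mathrm{supp}(x')=\mathrm{supp}(x_0)$. Moreover $|x'_j|>\|\epsilon\|_2$ for $j\in S$, $\|Ax'-b\|_2\le\|\epsilon\|_2$ and $\|x'-x_0\|_2\le\|\epsilon\|_2/\beta_K$.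
   Context: $\|A\|_{\infty,col}=\max_i\|a_i\|_2$ over the columns $a_i$ of $A$. $\mathrm{card}(x)$ is the number of nonzero entries, $P_K=\{x:\mathrm{card}(x)\le K\}$, $\iota_{P_K}$ its indicator function; $\beta_k=\inf\{\|Ax\|_2/\|x\|_2:x\ne0,\ \mathrm{card}(x)\le k\}$. $\mathcal{Q}_2(\iota_{P_K})$ is the function such that $\mathcal{Q}_2(\iota_{P_K})(x)+\|x\|^2$ is the lower semicontinuous convex envelope of $\iota_{P_K}(x)+\|x\|^2$; explicitly, with $\tilde x$ the entries of $x$ sorted so that $|\tilde x_j|$ is non-increasing, $\mathcal{Q}_2(\iota_{P_K})(x)=\frac{1}{k_*}\big(\sum_{j>K-k_*}|\tilde x_j|\big)^2-\sum_{j>K-k_*}|\tilde x_j|^2$, where $k_*$ is the largest $k\in\{1,\dots,K\}$ with $\sum_{j>K-k}|\tilde x_j|-k|\tilde x_{K+1-k}|\ge0$. $\mathcal{K}_{K,reg}(x)=\mathcal{Q}_2(\iota_{P_K})(x)+\|Ax-b\|_2^2$. $A_S$ is $A$ with columns outside $S$ set to zero; the oracle solution is $x_S=(A_S^*A_S)^\dagger A_S^*b$ ($\dagger$ Moore–Penrose inverse, $A^*$ conjugate transpose). *)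

theory Defs
  imports "HOL-Analysis.Analysis" "HOL-Library.Multiset"
begin

text \<open>Vectors in F^n are 'a^'n, matrices in F^(m x n) are 'a^'n^'m, with
  'a = real or complex; the field conjugation is passed as parameter cj
  (id for real, cnj for complex). The norm of 'a^'n is the Euclidean 2-norm.\<close>

definition supp :: "'a::zero^'n \<Rightarrow> 'n set" where
  "supp x = {i. x $ i \<noteq> 0}"

definition card_nz :: "'a::zero^'n \<Rightarrow> nat" where
  "card_nz x = card (supp x)"

definition col_inf_norm_le1 :: "'a::real_normed_vector^'n^'m \<Rightarrow> bool" where
  "col_inf_norm_le1 A \<longleftrightarrow> (\<forall>j. norm (column j A) \<le> 1)"

definition beta :: "'a::real_normed_field^'n^'m \<Rightarrow> nat \<Rightarrow> real" where
  "beta A k = Inf {norm (A *v x) / norm x | x. x \<noteq> 0 \<and> card_nz x \<le> k}"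

text \<open>Absolute values of the entries, sorted non-increasingly; 1-indexed access.\<close>
definition sorted_abs :: "'a::real_normed_vector^'n \<Rightarrow> real list" where
  "sorted_abs x = rev (sorted_list_of_multiset (image_mset (\<lambda>i. norm (x $ i)) (mset_set UNIV)))"

definition xt :: "'a::real_normed_vector^'n \<Rightarrow> nat \<Rightarrow> real" where
  "xt x j = sorted_abs x ! (j - 1)"

definition tailsum :: "'a::real_normed_vector^'n \<Rightarrow> nat \<Rightarrow> nat \<Rightarrow> real" where
  "tailsum x K k = (\<Sum>j\<in>{K - k + 1..CARD('n)}. xt x j)"

definition kstar :: "'a::real_normed_vector^'n \<Rightarrow> nat \<Rightarrow> nat" where
  "kstar x K = (GREATEST k. k \<in> {1..K} \<and> tailsum x K k - real k * xt x (K + 1 - k) \<ge> 0)"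

definition Q2 :: "nat \<Rightarrow> 'a::real_normed_vector^'n \<Rightarrow> real" where
  "Q2 K x = (let k = kstar x K in
     (1 / real k) * (tailsum x K k)\<^sup>2 - (\<Sum>j\<in>{K - k + 1..CARD('n)}. (xt x j)\<^sup>2))"

definition KKreg :: "nat \<Rightarrow> 'a::real_normed_field^'n^'m \<Rightarrow> 'a^'m \<Rightarrow> 'a^'n \<Rightarrow> real" where
  "KKreg K A b x = Q2 K x + (norm (A *v x - b))\<^sup>2"

definition strict_local_min :: "('b::metric_space \<Rightarrow> real) \<Rightarrow> 'b \<Rightarrow> bool" where
  "strict_local_min f x \<longleftrightarrow> (\<exists>\<delta>>0. \<forall>y. y \<noteq> x \<and> dist y x < \<delta> \<longrightarrow> f x < f y)"

definition conjT :: "('a \<Rightarrow> 'a) \<Rightarrow> 'a^'n^'m \<Rightarrow> 'a^'m^'n" where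
  "conjT cj M = (\<chi> i j. cj (M $ j $ i))"

definition pinv :: "('a::comm_ring_1 \<Rightarrow> 'a) \<Rightarrow> 'a^'n^'m \<Rightarrow> 'a^'m^'n" where
  "pinv cj M = (THE X. M ** X ** M = M \<and> X ** M ** X = X \<and>
                 conjT cj (M ** X) = M ** X \<and> conjT cj (X ** M) = X ** M)"

definition restrict_cols :: "'a::zero^'n^'m \<Rightarrow> 'n set \<Rightarrow> 'a^'n^'m" where
  "restrict_cols A S = (\<chi> i j. if j \<in> S then A $ i $ j else 0)"

definition oracle_sol :: "('a::comm_ring_1 \<Rightarrow> 'a) \<Rightarrow> 'a^'n^'m \<Rightarrow> 'n set \<Rightarrow> 'a^'m \<Rightarrow> 'a^'n" where
  "oracle_sol cj A S b = (let AS = restrict_cols A S in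
     pinv cj (conjT cj AS ** AS) *v (conjT cj AS *v b))"

end

theory Submission
  imports Defs
begin


lemma norm_sq_vec: "(norm (v::'a::real_normed_vector^'n))^2 = (\<Sum>i\<in>UNIV. (norm (v$i))^2)"
  by (simp add: norm_vec_def L2_set_def sum_nonneg)

lemma matrix_add_rdistrib: "((B + C) ** A) = (B ** A) + (C ** A)"
  for A :: "'a::semiring_1^'p^'n"
  by (simp add: matrix_matrix_mult_def vec_eq_iff sum.distrib[symmetric] distrib_right)

lemma matrix_diff_rdistrib: "((B - C) ** A) = (B ** A) - (C ** A)"
  for A :: "'a::ring_1^'p^'n"
  by (simp add: matrix_matrix_mult_def vec_eq_iff sum_subtractf[symmetric] left_diff_distrib)

lemma matrix_diff_ldistrib: "(A ** (B - C)) = (A ** B) - (A ** C)"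
  for A :: "'a::ring_1^'n^'m"
  by (simp add: matrix_matrix_mult_def vec_eq_iff sum_subtractf[symmetric] right_diff_distrib)

lemma sum_delta_conj:
  "(\<Sum>k\<in>(UNIV::'n::finite set). if k = j \<and> P k then f k else 0) = (if P j then f j else (0::'b::comm_monoid_add))"
proof -
  have "(\<Sum>k\<in>(UNIV::'n set). if k = j \<and> P k then f k else 0) = (\<Sum>k\<in>UNIV. if k = j then (if P k then f k else 0) else 0)"
    by (rule sum.cong) auto
  then show ?thesis by simp
qed

locale cjl =
  fixes cj :: "'a::real_normed_field \<Rightarrow> 'a"
  assumes cj_add: "cj (x + y) = cj x + cj y"
    and cj_mult: "cj (x * y) = cj x * cj y"
    and cj_cj: "cj (cj x) = x"
    and cj_norm: "cj x * x = of_real ((norm x)^2)"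
begin

lemma cj_0[simp]: "cj 0 = 0"
  using cj_add[of 0 0] by simp

lemma cj_1[simp]: "cj 1 = 1"
  using cj_norm[of 1] by simp

lemma cj_uminus: "cj (- x) = - cj x"
  using cj_add[of x "-x"] by (simp add: eq_neg_iff_add_eq_0 add.commute)

lemma cj_diff: "cj (x - y) = cj x - cj y"
  using cj_add[of x "-y"] cj_uminus[of y] by simp

lemma cj_sum: "cj (sum f A) = (\<Sum>a\<in>A. cj (f a))"
  by (induction A rule: infinite_finite_induct) (auto simp: cj_add)

definition ip :: "'a^'k \<Rightarrow> 'a^'k \<Rightarrow> 'a" where
  "ip u v = (\<Sum>i\<in>UNIV. cj (u$i) * v$i)"

lemma ip_self: "ip v v = of_real ((norm v)^2)"
  by (simp add: ip_def cj_norm norm_sq_vec)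

lemma ip_swap: "ip w u = cj (ip u w)"
  by (simp add: ip_def cj_sum cj_mult cj_cj mult.commute)

lemma ip_add_left: "ip (u + v) w = ip u w + ip v w"
  by (simp add: ip_def cj_add distrib_right sum.distrib)

lemma ip_add_right: "ip w (u + v) = ip w u + ip w v"
  by (simp add: ip_def distrib_left sum.distrib)

lemma ip_zero_right[simp]: "ip w 0 = 0"
  by (simp add: ip_def)

lemma pythag:
  assumes "ip u w = 0"
  shows "(norm (u + w))^2 = (norm u)^2 + (norm w)^2"
proof -
  have "ip w u = 0" using assms ip_swap[of w u] by simp
  have "ip (u+w) (u+w) = ip u u + ip w w"
    using assms \<open>ip w u = 0\<close> by (simp add: ip_add_left ip_add_right)
  then have "(of_real ((norm (u + w))^2) :: 'a) = of_real ((norm u)^2 + (norm w)^2)"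
    by (simp only: ip_self of_real_add)
  then show ?thesis using of_real_eq_iff by blast
qed

lemma ip_adj: "ip u (conjT cj B *v w) = ip (B *v u) w"
proof -
  have "ip u (conjT cj B *v w) = (\<Sum>i\<in>UNIV. \<Sum>k\<in>UNIV. cj (u$i) * (cj (B$k$i) * w$k))"
    by (simp add: ip_def conjT_def matrix_vector_mult_def sum_distrib_left)
  also have "\<dots> = (\<Sum>k\<in>UNIV. \<Sum>i\<in>UNIV. cj (u$i) * (cj (B$k$i) * w$k))"
    by (rule sum.swap)
  also have "\<dots> = ip (B *v u) w"
    by (simp add: ip_def matrix_vector_mult_def cj_sum cj_mult sum_distrib_right sum_distrib_left mult_ac)
  finally show ?thesis .
qed

lemma conjT_mult: "conjT cj (A ** B) = conjT cj B ** conjT cj A"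
  by (simp add: conjT_def matrix_matrix_mult_def vec_eq_iff cj_sum cj_mult mult.commute)

lemma conjT_conjT[simp]: "conjT cj (conjT cj A) = A"
  by (simp add: conjT_def vec_eq_iff cj_cj)


definition penrose :: "'a^'n^'n \<Rightarrow> 'a^'n^'n \<Rightarrow> bool" where
  "penrose M X \<longleftrightarrow> M ** X ** M = M \<and> X ** M ** X = X \<and>
                 conjT cj (M ** X) = M ** X \<and> conjT cj (X ** M) = X ** M"

lemma penrose_unique:
  assumes X: "penrose M X" and Y: "penrose M Y"
  shows "X = Y"
proof -
  note H = conjT_mult
  have x1: "M ** X ** M = M" "X ** M ** X = X" "conjT cj (M ** X) = M ** X" "conjT cj (X ** M) = X ** M"
    using X by (auto simp: penrose_def)
  have y1: "M ** Y ** M = M" "Y ** M ** Y = Y" "conjT cj (M ** Y) = M ** Y" "conjT cj (Y ** M) = Y ** M"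
    using Y by (auto simp: penrose_def)
  have cM1: "conjT cj M = conjT cj M ** (M ** Y)"
  proof -
    have "conjT cj M = conjT cj (M ** Y ** M)" using y1 by simp
    also have "\<dots> = conjT cj M ** conjT cj (M ** Y)" by (simp add: H)
    finally show ?thesis using y1 by simp
  qed
  have cM2: "conjT cj M = (X ** M) ** conjT cj M"
  proof -
    have "conjT cj M = conjT cj (M ** X ** M)" using x1 by simp
    also have "\<dots> = conjT cj (X ** M) ** conjT cj M" by (simp add: H matrix_mul_assoc)
    finally show ?thesis using x1 by simp
  qed
  have "X = X ** (M ** X)" using x1 by (simp add: matrix_mul_assoc)
  also have "\<dots> = X ** conjT cj (M ** X)" using x1 by simp
  also have "\<dots> = X ** conjT cj X ** conjT cj M" by (simp add: H matrix_mul_assoc)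
  also have "\<dots> = X ** conjT cj X ** (conjT cj M ** (M ** Y))" using cM1 by simp
  also have "\<dots> = X ** conjT cj (M ** X) ** M ** Y" by (simp add: H matrix_mul_assoc)
  also have "\<dots> = X ** M ** X ** M ** Y" using x1 by (simp add: matrix_mul_assoc)
  also have "\<dots> = X ** M ** Y" using x1 by simp
  finally have 1: "X = X ** M ** Y" .
  have "Y = (Y ** M) ** Y" using y1 by simp
  also have "\<dots> = conjT cj (Y ** M) ** Y" using y1 by simp
  also have "\<dots> = conjT cj M ** conjT cj Y ** Y" by (simp add: H)
  also have "\<dots> = (X ** M) ** conjT cj M ** conjT cj Y ** Y" using cM2 by simp
  also have "\<dots> = X ** M ** conjT cj (Y ** M) ** Y" by (simp add: H matrix_mul_assoc)
  also have "\<dots> = X ** M ** Y ** M ** Y" using y1 by (simp add: matrix_mul_assoc)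
  also have "\<dots> = X ** M ** Y" using y1(2) by (metis matrix_mul_assoc)
  finally show ?thesis using 1 by simp
qed


lemma restrict_mult:
  assumes "\<forall>j. j \<notin> S \<longrightarrow> v$j = 0"
  shows "restrict_cols A S *v v = A *v v"
  using assms by (auto simp: restrict_cols_def matrix_vector_mult_def vec_eq_iff intro!: sum.cong)

lemma oracle_props:
  fixes A :: "'a^'n^'m" and S :: "'n set" and b :: "'a^'m"
  assumes inj: "\<And>v. (\<forall>j. j \<notin> S \<longrightarrow> v$j = 0) \<Longrightarrow> A *v v = 0 \<Longrightarrow> v = 0"
  shows "\<forall>j. j \<notin> S \<longrightarrow> oracle_sol cj A S b $ j = 0"
    and "conjT cj (restrict_cols A S) *v (restrict_cols A S *v oracle_sol cj A S b - b) = 0"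
proof -
  define AS where "AS = restrict_cols A S"
  define G where "G = conjT cj AS ** AS"
  define D :: "'a^'n^'n" where "D = (\<chi> i j. if i = j \<and> i \<notin> S then 1 else 0)"
  define E :: "'a^'n^'n" where "E = (\<chi> i j. if i = j \<and> i \<in> S then 1 else 0)"
  have ASo: "AS$k$i = 0" if "i \<notin> S" for k i using that by (simp add: AS_def restrict_cols_def)
  have G1: "G$i$j = 0" if "i \<notin> S" for i j
    using that by (simp add: G_def matrix_matrix_mult_def conjT_def ASo)
  have G2: "G$i$j = 0" if "j \<notin> S" for i j
    using that by (simp add: G_def matrix_matrix_mult_def conjT_def ASo)
  have Dl: "D ** M = (\<chi> i j. if i \<notin> S then M$i$j else 0)" for M :: "'a^'n^'n"
    by (simp add: matrix_matrix_mult_def D_def vec_eq_iff if_distrib[of "\<lambda>x. x * _"] cong: if_cong)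
  have Dr: "M ** D = (\<chi> i j. if j \<notin> S then M$i$j else 0)" for M :: "'a^'n^'n"
    by (simp add: matrix_matrix_mult_def D_def vec_eq_iff if_distrib[of "\<lambda>x. _ * x"] sum_delta_conj cong: if_cong)
  have Dv_gen: "D *v w = (\<chi> i. if i \<notin> S then w$i else 0)" for w
    by (simp add: matrix_vector_mult_def D_def vec_eq_iff if_distrib[of "\<lambda>x. x * _"] cong: if_cong)
  have GD: "G ** D = 0"
    by (auto simp: matrix_matrix_mult_def D_def vec_eq_iff G2 intro!: sum.neutral)
  have DG: "D ** G = 0"
    by (auto simp: matrix_matrix_mult_def D_def vec_eq_iff G1 intro!: sum.neutral)
  have DD: "D ** D = D"
    unfolding Dl by (auto simp: vec_eq_iff D_def)
  have ED: "E = mat 1 - D"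
    by (auto simp: E_def D_def mat_def vec_eq_iff)
  have cG: "conjT cj G = G"
    by (simp add: G_def conjT_mult)
  have cE: "conjT cj E = E"
    by (auto simp: conjT_def E_def vec_eq_iff)
  have injGD: "v = 0" if v: "(G + D) *v v = 0" for v
  proof -
    have vo: "\<forall>j. j \<notin> S \<longrightarrow> v$j = 0"
    proof (intro allI impI)
      fix j assume j: "j \<notin> S"
      have "((G + D) *v v)$j = (G *v v)$j + (D *v v)$j"
        by (simp add: matrix_vector_mult_add_rdistrib)
      also have "(G *v v)$j = 0" using j by (simp add: matrix_vector_mult_def G1)
      also have "(D *v v)$j = v$j" using j by (simp add: Dv_gen)
      finally have "((G + D) *v v)$j = v$j" by simp
      then show "v$j = 0" using v by simp
    qed
    have Dv: "D *v v = 0"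
      using vo by (auto simp: Dv_gen vec_eq_iff)
    have "G *v v = 0" using v Dv by (simp add: matrix_vector_mult_add_rdistrib)
    then have "ip v (conjT cj AS *v (AS *v v)) = 0"
      by (simp add: G_def matrix_vector_mul_assoc)
    then have "ip (AS *v v) (AS *v v) = 0" by (simp add: ip_adj)
    then have "AS *v v = 0" by (simp add: ip_self)
    then have "A *v v = 0" using restrict_mult[OF vo, of A] by (simp add: AS_def)
    then show "v = 0" using inj vo by blast
  qed
  have "\<exists>B. B ** (G + D) = mat 1"
    using injGD by (subst matrix_left_invertible_ker) blast
  then obtain Q where Q1: "Q ** (G + D) = mat 1" by blast
  then have Q2: "(G + D) ** Q = mat 1" by (simp add: matrix_left_right_inverse)
  have DQ: "D ** Q = D"
  proof -
    have "D ** Q = (D ** (G + D)) ** Q" using DG DD by (simp add: matrix_add_ldistrib)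
    also have "\<dots> = D" using Q2 by (simp add: matrix_mul_assoc[symmetric])
    finally show ?thesis .
  qed
  have QD: "Q ** D = D"
  proof -
    have "Q ** D = Q ** ((G + D) ** D)" using GD DD by (simp add: matrix_add_rdistrib)
    also have "\<dots> = D" using Q1 by (simp add: matrix_mul_assoc)
    finally show ?thesis .
  qed
  define X where "X = Q - D"
  have GX: "G ** X = E"
  proof -
    have "G ** X = G ** Q" using GD by (simp add: X_def matrix_diff_ldistrib)
    also have "\<dots> = (G + D) ** Q - D ** Q" by (simp add: matrix_add_rdistrib)
    also have "\<dots> = E" using Q2 DQ ED by simp
    finally show ?thesis .
  qed
  have XG: "X ** G = E"
  proof -
    have "X ** G = Q ** G" using DG by (simp add: X_def matrix_diff_rdistrib)
    also have "\<dots> = Q ** (G + D) - Q ** D" by (simp add: matrix_add_ldistrib)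
    also have "\<dots> = E" using Q1 QD ED by simp
    finally show ?thesis .
  qed
  have EG: "E ** G = G" using DG ED by (simp add: matrix_diff_rdistrib)
  have EX: "E ** X = X"
  proof -
    have "E ** X = X - D ** X" by (simp add: ED matrix_diff_rdistrib)
    also have "D ** X = 0" using DQ DD by (simp add: X_def matrix_diff_ldistrib)
    finally show ?thesis by simp
  qed
  have pX: "penrose G X"
    unfolding penrose_def by (simp only: GX XG EG EX cE)
  have pinvX: "pinv cj G = X"
    unfolding pinv_def
  proof (rule the_equality)
    show "G ** X ** G = G \<and> X ** G ** X = X \<and> conjT cj (G ** X) = G ** X \<and> conjT cj (X ** G) = X ** G"
      using pX by (simp add: penrose_def)
  next
    fix Y assume "G ** Y ** G = G \<and> Y ** G ** Y = Y \<and> conjT cj (G ** Y) = G ** Y \<and> conjT cj (Y ** G) = Y ** G"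
    then have "penrose G Y" by (simp add: penrose_def)
    then show "Y = X" using pX penrose_unique by blast
  qed
  have xs: "oracle_sol cj A S b = X *v (conjT cj AS *v b)"
    by (simp add: oracle_sol_def Let_def AS_def[symmetric] G_def[symmetric] pinvX)
  show "\<forall>j. j \<notin> S \<longrightarrow> oracle_sol cj A S b $ j = 0"
  proof (intro allI impI)
    fix j assume j: "j \<notin> S"
    have "oracle_sol cj A S b = E *v (X *v (conjT cj AS *v b))"
      using xs EX by (metis matrix_vector_mul_assoc)
    then show "oracle_sol cj A S b $ j = 0"
      using j by (simp add: matrix_vector_mult_def E_def)
  qed
  have Ab: "E *v (conjT cj AS *v b) = conjT cj AS *v b"
  proof -
    have Ev: "E *v w = (\<chi> i. if i \<in> S then w$i else 0)" for w
      by (simp add: matrix_vector_mult_def E_def vec_eq_iff if_distrib[of "\<lambda>x. x * _"] cong: if_cong)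
    have "(conjT cj AS *v b)$j = 0" if "j \<notin> S" for j
      using that by (simp add: matrix_vector_mult_def conjT_def ASo)
    then show ?thesis by (auto simp: Ev vec_eq_iff)
  qed
  have "G *v oracle_sol cj A S b = conjT cj AS *v b"
    using xs GX Ab by (metis matrix_vector_mul_assoc)
  then show "conjT cj (restrict_cols A S) *v (restrict_cols A S *v oracle_sol cj A S b - b) = 0"
    by (simp add: AS_def[symmetric] G_def matrix_vector_mult_diff_distrib matrix_vector_mul_assoc)
qed

end


lemma Q2_core:
  fixes a :: "nat \<Rightarrow> real" and N K k :: nat and \<tau> :: real
  assumes k1: "1 \<le> k" "k \<le> K" "K \<le> N"
   and mono: "\<And>i j. 1 \<le> i \<Longrightarrow> i \<le> j \<Longrightarrow> j \<le> N \<Longrightarrow> a j \<le> a i"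
   and nn: "\<And>j. 1 \<le> j \<Longrightarrow> j \<le> N \<Longrightarrow> 0 \<le> a j"
   and cond: "(\<Sum>j\<in>{K-k+1..N}. a j) - real k * a (K+1-k) \<ge> 0"
   and tl: "\<And>j. j \<in> {K+1..N} \<Longrightarrow> a j \<le> \<tau>"
  shows "(1/real k) * (\<Sum>j\<in>{K-k+1..N}. a j)^2 - (\<Sum>j\<in>{K-k+1..N}. (a j)^2)
          \<ge> (\<Sum>j\<in>{K+1..N}. a j) * (2 * a K - (\<Sum>j\<in>{K+1..N}. a j) - \<tau>)"
    and "(\<Sum>j\<in>{K+1..N}. a j) = 0 \<Longrightarrow>
         (1/real k) * (\<Sum>j\<in>{K-k+1..N}. a j)^2 - (\<Sum>j\<in>{K-k+1..N}. (a j)^2) \<le> 0"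
proof -
  define T where "T = (\<Sum>j\<in>{K+1..N}. a j)"
  define B where "B = {K-k+1..K}"
  define C where "C = {K+1..N}"
  define M where "M = a (K+1-k)"
  define s where "s = (\<Sum>j\<in>B. a j)"
  define Qs where "Qs = (\<Sum>j\<in>C. (a j)^2)"
  define d where "d j = M - a j" for j
  define D where "D = (\<Sum>j\<in>B. d j)"
  have BC: "{K-k+1..N} = B \<union> C" "B \<inter> C = {}" using k1 by (auto simp: B_def C_def)
  have cB: "card B = k" using k1 by (simp add: B_def)
  have kpos: "real k > 0" using k1 by simp
  have sum1: "(\<Sum>j\<in>{K-k+1..N}. a j) = s + T"
    unfolding BC(1) s_def T_def C_def[symmetric]
    by (rule sum.union_disjoint) (use BC(2) in \<open>auto simp: B_def C_def\<close>)
  have sum2: "(\<Sum>j\<in>{K-k+1..N}. (a j)^2) = (\<Sum>j\<in>B. (a j)^2) + Qs"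
    unfolding BC(1) Qs_def
    by (rule sum.union_disjoint) (use BC(2) in \<open>auto simp: B_def C_def\<close>)
  have Ds: "D = real k * M - s"
    by (simp add: D_def d_def sum_subtractf cB s_def)
  have dnn: "d j \<ge> 0" if "j \<in> B" for j
    using that k1 mono[of "K+1-k" j] by (auto simp: d_def M_def B_def)
  have Dnn: "D \<ge> 0" using dnn by (simp add: D_def sum_nonneg)
  have T0: "T \<ge> 0" unfolding T_def by (rule sum_nonneg) (simp add: nn)
  have DT: "D \<le> T" using cond sum1 Ds by (simp add: M_def)
  have dD: "d j \<le> D" if "j \<in> B" for j
    unfolding D_def using that dnn by (intro member_le_sum) (auto simp: B_def)
  have sd2: "(\<Sum>j\<in>B. (d j)^2) \<le> D^2"
  proof -
    have "(\<Sum>j\<in>B. (d j)^2) \<le> (\<Sum>j\<in>B. D * d j)"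
      using dD dnn by (intro sum_mono) (simp add: power2_eq_square mult_right_mono)
    also have "\<dots> = D^2" by (simp add: D_def sum_distrib_left power2_eq_square)
    finally show ?thesis .
  qed
  have sa2: "(\<Sum>j\<in>B. (a j)^2) = real k * M^2 - 2 * M * D + (\<Sum>j\<in>B. (d j)^2)"
  proof -
    have "(\<Sum>j\<in>B. (a j)^2) = (\<Sum>j\<in>B. M^2 - 2 * M * d j + (d j)^2)"
      by (intro sum.cong) (auto simp: d_def power2_eq_square algebra_simps)
    also have "\<dots> = real k * M^2 - 2 * M * D + (\<Sum>j\<in>B. (d j)^2)"
      by (simp add: sum.distrib sum_subtractf cB D_def sum_distrib_left)
    finally show ?thesis .
  qed
  have ident: "(1/real k) * (\<Sum>j\<in>{K-k+1..N}. a j)^2 - (\<Sum>j\<in>{K-k+1..N}. (a j)^2)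
       = 2 * M * T + (T - D)^2 / real k - (\<Sum>j\<in>B. (d j)^2) - Qs"
  proof -
    have s': "s = real k * M - D" using Ds by simp
    show ?thesis unfolding sum1 sum2 sa2 s' using kpos
      by (simp add: field_simps power2_eq_square)
  qed
  have Qs_le: "Qs \<le> \<tau> * T"
  proof -
    have "Qs \<le> (\<Sum>j\<in>C. \<tau> * a j)"
      unfolding Qs_def using tl nn
      by (intro sum_mono) (auto simp: C_def power2_eq_square mult_right_mono)
    then show ?thesis by (simp add: sum_distrib_left T_def C_def)
  qed
  have Qs0: "Qs \<ge> 0" by (simp add: Qs_def sum_nonneg)
  have MaK: "a K \<le> M" using k1 mono[of "K+1-k" K] by (simp add: M_def)
  have "2 * M * T + (T - D)^2 / real k - (\<Sum>j\<in>B. (d j)^2) - Qs \<ge> 2 * M * T - T^2 - \<tau> * T"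
  proof -
    have "D^2 \<le> T^2" using Dnn DT by (simp add: power_mono)
    moreover have "(T - D)^2 / real k \<ge> 0" using kpos by simp
    ultimately show ?thesis using sd2 Qs_le by linarith
  qed
  moreover have "2 * M * T \<ge> 2 * a K * T" using MaK T0 by (simp add: mult_right_mono)
  ultimately show "(1/real k) * (\<Sum>j\<in>{K-k+1..N}. a j)^2 - (\<Sum>j\<in>{K-k+1..N}. (a j)^2)
          \<ge> (\<Sum>j\<in>{K+1..N}. a j) * (2 * a K - (\<Sum>j\<in>{K+1..N}. a j) - \<tau>)"
    unfolding ident T_def[symmetric] by (simp add: algebra_simps power2_eq_square)
  assume "(\<Sum>j\<in>{K+1..N}. a j) = 0"
  then have "T = 0" by (simp add: T_def)
  then have "D = 0" using Dnn DT by simp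
  then show "(1/real k) * (\<Sum>j\<in>{K-k+1..N}. a j)^2 - (\<Sum>j\<in>{K-k+1..N}. (a j)^2) \<le> 0"
  proof -
    have "(\<Sum>j\<in>B. (d j)^2) \<ge> 0" by (simp add: sum_nonneg)
    then show ?thesis unfolding ident using \<open>T = 0\<close> \<open>D = 0\<close> sd2 Qs0 by simp
  qed
qed


lemma sorted_abs_len: "length (sorted_abs (y::'a::real_normed_vector^'n)) = CARD('n)"
  by (simp add: sorted_abs_def size_mset[symmetric] del: size_mset)

lemma sorted_abs_mono:
  fixes y :: "'a::real_normed_vector^'n"
  assumes "i \<le> j" "j < CARD('n)"
  shows "sorted_abs y ! j \<le> sorted_abs y ! i"
proof -
  define L where "L = sorted_list_of_multiset (image_mset (\<lambda>i. norm (y $ i)) (mset_set (UNIV::'n set)))"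
  have len: "length L = CARD('n)" using sorted_abs_len[of y] by (simp add: sorted_abs_def L_def)
  have s: "sorted L" by (simp add: L_def)
  have "sorted_abs y ! j = L ! (length L - Suc j)" using assms len by (simp add: sorted_abs_def L_def[symmetric] rev_nth)
  moreover have "sorted_abs y ! i = L ! (length L - Suc i)" using assms len by (simp add: sorted_abs_def L_def[symmetric] rev_nth)
  moreover have "L ! (length L - Suc j) \<le> L ! (length L - Suc i)"
    using assms len by (intro sorted_nth_mono[OF s]) auto
  ultimately show ?thesis by simp
qed

lemma sorted_abs_nonneg:
  fixes y :: "'a::real_normed_vector^'n"
  assumes "j < CARD('n)"
  shows "sorted_abs y ! j \<ge> 0"
proof -
  have "sorted_abs y ! j \<in> set (sorted_abs y)" using assms sorted_abs_len[of y] by simp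
  then show ?thesis by (auto simp: sorted_abs_def)
qed

lemma sorted_abs_split:
  fixes y :: "'a::real_normed_vector^'n" and S :: "'n set"
  assumes sep: "\<And>i j. i \<in> S \<Longrightarrow> j \<notin> S \<Longrightarrow> norm (y$j) \<le> norm (y$i)"
  shows "\<And>j. j < card S \<Longrightarrow> sorted_abs y ! j \<in> (\<lambda>i. norm (y$i)) ` S"
   and "\<And>j. card S \<le> j \<Longrightarrow> j < CARD('n) \<Longrightarrow> sorted_abs y ! j \<in> (\<lambda>i. norm (y$i)) ` (-S)"
   and "sum_list (drop (card S) (sorted_abs y)) = (\<Sum>i\<in>-S. norm (y$i))"
proof -
  define f where "f i = norm (y$i)" for i
  define M1 where "M1 = image_mset f (mset_set (-S))"
  define M2 where "M2 = image_mset f (mset_set S)"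
  define l1 where "l1 = sorted_list_of_multiset M1"
  define l2 where "l2 = sorted_list_of_multiset M2"
  have U: "mset_set (UNIV::'n set) = mset_set (-S) + mset_set S"
    by (subst mset_set_Union[symmetric]) auto
  have sl1: "set l1 = f ` (-S)" by (simp add: l1_def M1_def)
  have sl2: "set l2 = f ` S" by (simp add: l2_def M2_def)
  have srt: "sorted (l1 @ l2)"
    unfolding sorted_append using sep
    by (auto simp: sl1 sl2 f_def) (auto simp: l1_def l2_def)
  have "sorted_list_of_multiset (M1 + M2) = l1 @ l2"
  proof -
    have "M1 + M2 = mset (l1 @ l2)" by (simp add: l1_def l2_def)
    then have "sorted_list_of_multiset (M1 + M2) = sort (l1 @ l2)"
      by (metis sorted_list_of_multiset_mset)
    then show ?thesis using srt by (simp add: sorted_sort_id)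
  qed
  then have SA: "sorted_abs y = rev l2 @ rev l1"
  proof -
    have "sorted_abs y = rev (sorted_list_of_multiset (M1 + M2))"
      unfolding sorted_abs_def U M1_def M2_def f_def by simp
    then show ?thesis using \<open>sorted_list_of_multiset (M1 + M2) = l1 @ l2\<close> by simp
  qed
  have len2: "length l2 = card S"
    by (simp add: l2_def M2_def size_mset[symmetric] del: size_mset)
  have len1: "length l1 = card (-S)"
    by (simp add: l1_def M1_def size_mset[symmetric] del: size_mset)
  have cS: "card S + card (-S) = CARD('n)"
  proof -
    have "card (S \<union> -S) = card S + card (-S)" by (rule card_Un_disjoint) auto
    then show ?thesis by (simp add: Un_ac)
  qed
  show "sorted_abs y ! j \<in> (\<lambda>i. norm (y$i)) ` S" if "j < card S" for j
  proof -
    have "sorted_abs y ! j = rev l2 ! j" using that len2 by (simp add: SA nth_append)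
    also have "\<dots> \<in> set l2" using that len2 by (metis length_rev nth_mem set_rev)
    finally show ?thesis using sl2 by (simp add: f_def)
  qed
  show "sorted_abs y ! j \<in> (\<lambda>i. norm (y$i)) ` (-S)" if "card S \<le> j" "j < CARD('n)" for j
  proof -
    have "sorted_abs y ! j = rev l1 ! (j - card S)" using that len2 by (simp add: SA nth_append)
    also have "\<dots> \<in> set l1" using that len1 cS by (intro nth_mem[where xs="rev l1", simplified]) simp
    finally show ?thesis using sl1 by (simp add: f_def)
  qed
  have "sum_list (drop (card S) (sorted_abs y)) = sum_list l1"
    using len2 by (simp add: SA)
  also have "\<dots> = sum_mset M1" by (simp add: l1_def sum_mset_sum_list[symmetric])
  also have "\<dots> = (\<Sum>i\<in>-S. norm (y$i))" unfolding M1_def f_def[abs_def] sum_unfold_sum_mset by simp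
  finally show "sum_list (drop (card S) (sorted_abs y)) = (\<Sum>i\<in>-S. norm (y$i))" .
qed


lemma sum_list_drop_nth:
  assumes "K \<le> length L"
  shows "sum_list (drop K L) = (\<Sum>j\<in>{K+1..length L}. L ! (j - 1))"
proof -
  have "(\<Sum>j\<in>{K+1..length L}. L ! (j - 1)) = (\<Sum>i\<in>{K..<length L}. L ! i)"
    by (rule sum.reindex_bij_witness[where i="\<lambda>i. i + 1" and j="\<lambda>j. j - 1"]) auto
  also have "\<dots> = (\<Sum>i\<in>{0..<length L - K}. L ! (i + K))"
    using sum.shift_bounds_nat_ivl[where g="\<lambda>i. L ! i" and m=0 and k=K and n="length L - K"] assms
    by simp
  also have "\<dots> = sum_list (drop K L)"
    using assms by (simp add: sum_list_sum_nth add.commute)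
  finally show ?thesis by simp
qed

lemma Q2_bounds:
  fixes y :: "'a::real_normed_vector^'n" and S :: "'n set" and \<mu> \<tau> :: real and K :: nat
  assumes sep: "\<And>i j. i \<in> S \<Longrightarrow> j \<notin> S \<Longrightarrow> norm (y$j) \<le> norm (y$i)"
   and K: "K = card S" "1 \<le> K"
   and mu: "\<And>i. i \<in> S \<Longrightarrow> \<mu> \<le> norm (y$i)"
   and tau: "\<And>j. j \<notin> S \<Longrightarrow> norm (y$j) \<le> \<tau>"
  shows "Q2 K y \<ge> (\<Sum>j\<in>-S. norm (y$j)) * (2 * \<mu> - (\<Sum>j\<in>-S. norm (y$j)) - \<tau>)"
    and "(\<Sum>j\<in>-S. norm (y$j)) = 0 \<Longrightarrow> Q2 K y \<le> 0"
proof -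
  define N where "N = CARD('n)"
  define a where "a = xt y"
  define T where "T = (\<Sum>j\<in>-S. norm (y$j))"
  have KN: "K \<le> N" unfolding K N_def by (rule card_mono) auto
  have len: "length (sorted_abs y) = N" by (simp add: sorted_abs_len N_def)
  have nn: "0 \<le> a j" if "1 \<le> j" "j \<le> N" for j
    using that sorted_abs_nonneg[of "j - 1" y] by (simp add: a_def xt_def N_def)
  have mono: "a j \<le> a i" if "1 \<le> i" "i \<le> j" "j \<le> N" for i j
    using that sorted_abs_mono[of "i - 1" "j - 1" y] by (simp add: a_def xt_def N_def)
  have Tsum: "(\<Sum>j\<in>{K+1..N}. a j) = T"
    using sum_list_drop_nth[of K "sorted_abs y"] sorted_abs_split(3)[where y=y and S=S, OF sep] KN len
    by (simp add: a_def xt_def T_def K)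
  have tl: "a j \<le> \<tau>" if "j \<in> {K+1..N}" for j
  proof -
    have "card S \<le> j - 1" "j - 1 < CARD('n)" using that K by (auto simp: N_def)
    then have "a j \<in> (\<lambda>i. norm (y$i)) ` (-S)"
      using sorted_abs_split(2)[where y=y and S=S, OF sep, where j="j - 1"] K by (simp add: a_def xt_def N_def)
    then show ?thesis using tau by auto
  qed
  have aK: "\<mu> \<le> a K"
  proof -
    have "a K \<in> (\<lambda>i. norm (y$i)) ` S"
      using sorted_abs_split(1)[where y=y and S=S, OF sep, where j="K - 1"] K by (simp add: a_def xt_def)
    then show ?thesis using mu by auto
  qed
  define P where "P k \<longleftrightarrow> k \<in> {1..K} \<and> tailsum y K k - real k * xt y (K + 1 - k) \<ge> 0" for k
  have P1: "P 1"
  proof -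
    have "tailsum y K 1 = (\<Sum>j\<in>{K..N}. a j)"
      using K by (simp add: tailsum_def a_def N_def)
    also have "\<dots> = a K + (\<Sum>j\<in>{K+1..N}. a j)"
      using KN by (simp add: sum.atLeast_Suc_atMost)
    finally have "tailsum y K 1 - xt y K = (\<Sum>j\<in>{K+1..N}. a j)" by (simp add: a_def)
    moreover have "(\<Sum>j\<in>{K+1..N}. a j) \<ge> 0" by (rule sum_nonneg) (simp add: nn)
    ultimately show ?thesis using K by (simp add: P_def)
  qed
  define k where "k = kstar y K"
  have Pk: "P k"
    unfolding k_def kstar_def P_def[symmetric]
    by (rule GreatestI_nat[where P=P and k=1 and b=K, OF P1]) (simp add: P_def)
  have k1: "1 \<le> k" "k \<le> K" using Pk by (auto simp: P_def)
  have cond: "(\<Sum>j\<in>{K-k+1..N}. a j) - real k * a (K+1-k) \<ge> 0"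
    using Pk by (simp add: P_def tailsum_def a_def N_def)
  have Q2eq: "Q2 K y = (1/real k) * (\<Sum>j\<in>{K-k+1..N}. a j)^2 - (\<Sum>j\<in>{K-k+1..N}. (a j)^2)"
    by (simp add: Q2_def k_def[symmetric] tailsum_def a_def N_def Let_def)
  note core = Q2_core[of k K N a, OF k1 KN mono nn cond tl]
  have T0: "T \<ge> 0" by (simp add: T_def sum_nonneg)
  have "T * (2 * \<mu> - T - \<tau>) \<le> T * (2 * a K - T - \<tau>)"
    using T0 aK by (intro mult_left_mono) auto
  also have "\<dots> \<le> Q2 K y" using core(1) Tsum Q2eq by simp
  finally show "Q2 K y \<ge> (\<Sum>j\<in>-S. norm (y$j)) * (2 * \<mu> - (\<Sum>j\<in>-S. norm (y$j)) - \<tau>)"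
    by (simp add: T_def)
  assume "(\<Sum>j\<in>-S. norm (y$j)) = 0"
  then show "Q2 K y \<le> 0" using core(2) Tsum Q2eq by (simp add: T_def)
qed


lemma norm_vsmult: "norm (c *s (x::'a::real_normed_field^'m)) = norm c * norm x"
  unfolding norm_vec_def by (simp add: L2_set_right_distrib norm_mult)

lemma norm_mat_vec_le:
  fixes A :: "'a::real_normed_field^'n^'m"
  assumes "col_inf_norm_le1 A"
  shows "norm (A *v w) \<le> (\<Sum>j\<in>UNIV. norm (w$j))"
proof -
  have "norm (A *v w) = norm (\<Sum>j\<in>UNIV. (w$j) *s column j A)"
    by (simp add: matrix_mult_sum)
  also have "\<dots> \<le> (\<Sum>j\<in>UNIV. norm ((w$j) *s column j A))"
    by (rule norm_sum)
  also have "\<dots> \<le> (\<Sum>j\<in>UNIV. norm (w$j))"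
    using assms by (intro sum_mono) (auto simp: norm_vsmult col_inf_norm_le1_def intro: mult_left_le)
  finally show ?thesis .
qed

lemma sq_bound_aux:
  fixes p q z :: real
  assumes "0 \<le> p" "0 \<le> q" "0 \<le> z" "p \<le> z + q"
  shows "p^2 - 2*p*q \<le> z^2"
proof (cases "p \<le> 2 * q")
  case True
  then have "p * (p - 2 * q) \<le> 0" using assms by (simp add: mult_nonneg_nonpos)
  then show ?thesis by (simp add: power2_eq_square algebra_simps) (smt (verit) assms(3) zero_le_mult_iff)
next
  case False
  then have "0 \<le> p - q" using assms by simp
  then have "(p - q)^2 \<le> z^2" using assms by (intro power_mono) auto
  then show ?thesis by (simp add: power2_eq_square algebra_simps) (smt (verit) assms(2) zero_le_mult_iff)
qed

context cjl
begin

lemma ip_minus_right: "ip u (- w) = - ip u w"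
  by (simp add: ip_def sum_negf)

lemma main:
  fixes A :: "'a^'n^'m" and x0 :: "'a^'n" and eps :: "'a^'m"
  assumes col: "col_inf_norm_le1 A" and x0nz: "x0 \<noteq> 0" and bpos: "beta A (card (supp x0)) > 0"
    and big: "\<forall>j\<in>supp x0. norm (x0 $ j) > (1 + 1 / beta A (card (supp x0))) * norm eps"
  shows "(let S = supp x0; K = card S; b = A *v x0 + eps; x' = oracle_sol cj A S b in
        strict_local_min (KKreg K A b) x' \<and> supp x' = supp x0 \<and>
        (\<forall>j\<in>S. norm (x' $ j) > norm eps) \<and>
        norm (A *v x' - b) \<le> norm eps \<and>
        norm (x' - x0) \<le> norm eps / beta A K)"
proof -
  define S where "S = supp x0"
  define K where "K = card S"
  define b where "b = A *v x0 + eps"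
  define x' where "x' = oracle_sol cj A S b"
  define \<beta> where "\<beta> = beta A K"
  define AS where "AS = restrict_cols A S"
  define r where "r = A *v x' - b"
  have bpos': "\<beta> > 0" using bpos by (simp add: \<beta>_def K_def S_def)
  have Sne: "S \<noteq> {}" using x0nz by (auto simp: S_def supp_def vec_eq_iff)
  have K1: "1 \<le> K" using Sne by (simp add: K_def Suc_le_eq card_gt_0_iff)
  have x0o: "x0$j = 0" if "j \<notin> S" for j using that by (simp add: S_def supp_def)
  have beta_le: "\<beta> * norm d \<le> norm (A *v d)" if dnz: "d \<noteq> 0" and ds: "\<forall>j. j \<notin> S \<longrightarrow> d$j = 0" for d
  proof -
    have "supp d \<subseteq> S" using ds by (auto simp: supp_def)
    then have "card_nz d \<le> K" unfolding card_nz_def K_def by (intro card_mono) auto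
    then have mem: "norm (A *v d) / norm d \<in> {norm (A *v x) / norm x | x. x \<noteq> 0 \<and> card_nz x \<le> K}"
      using dnz by blast
    have "bdd_below {norm (A *v x) / norm x | x. x \<noteq> 0 \<and> card_nz x \<le> K}"
      by (rule bdd_belowI[of _ 0]) auto
    then have "\<beta> \<le> norm (A *v d) / norm d"
      unfolding \<beta>_def beta_def using mem by (rule cInf_lower[rotated])
    then show ?thesis using dnz by (simp add: field_simps)
  qed
  have inj: "v = 0" if vs: "\<forall>j. j \<notin> S \<longrightarrow> v$j = 0" and Av: "A *v v = 0" for v
  proof (rule ccontr)
    assume "v \<noteq> 0"
    then have "\<beta> * norm v \<le> 0" using beta_le[OF _ vs] Av by simp
    moreover have "\<beta> * norm v > 0" using bpos' \<open>v \<noteq> 0\<close> by simp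
    ultimately show False by simp
  qed
  note OP = oracle_props[of S A b, OF inj]
  have x'o: "x'$j = 0" if "j \<notin> S" for j using OP(1) that by (simp add: x'_def)
  have ASx: "AS *v x' = A *v x'" unfolding AS_def by (rule restrict_mult) (simp add: x'o)
  have NE: "conjT cj AS *v r = 0" using OP(2) ASx by (simp add: x'_def[symmetric] AS_def[symmetric] r_def)
  have orth: "ip (A *v d) r = 0" if ds: "\<forall>j. j \<notin> S \<longrightarrow> d$j = 0" for d
  proof -
    have "A *v d = AS *v d" unfolding AS_def by (rule restrict_mult[symmetric]) (use ds in simp)
    then have "ip (A *v d) r = ip d (conjT cj AS *v r)" by (simp add: ip_adj)
    then show ?thesis using NE by simp
  qed
  define d where "d = x' - x0"
  have ds: "\<forall>j. j \<notin> S \<longrightarrow> d$j = 0" by (simp add: d_def x'o x0o)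
  have epsd: "A *v d + (- r) = eps"
    by (simp add: d_def r_def b_def matrix_vector_mult_diff_distrib)
  have "(norm eps)^2 = (norm (A *v d))^2 + (norm (- r))^2"
    unfolding epsd[symmetric] by (rule pythag) (simp add: ip_minus_right orth[OF ds])
  then have eps2: "(norm eps)^2 = (norm (A *v d))^2 + (norm r)^2" by simp
  have "(norm r)^2 \<le> (norm eps)^2"
    using eps2 zero_le_power2[of "norm (A *v d)"] by linarith
  then have rle: "norm r \<le> norm eps"
    by (rule power2_le_imp_le) simp
  have "(norm (A *v d))^2 \<le> (norm eps)^2"
    using eps2 zero_le_power2[of "norm r"] by linarith
  then have Adle: "norm (A *v d) \<le> norm eps"
    by (rule power2_le_imp_le) simp
  have dle: "norm d \<le> norm eps / \<beta>"
  proof (cases "d = 0")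
    case True then show ?thesis using bpos' by simp
  next
    case False
    then have "\<beta> * norm d \<le> norm eps" using beta_le[OF False ds] Adle by simp
    then show ?thesis using bpos' by (simp add: field_simps)
  qed
  have bigS: "norm (x'$j) > norm eps" if "j \<in> S" for j
  proof -
    have "norm (x0$j) \<le> norm (x'$j) + norm (d$j)"
      by (metis d_def add_diff_cancel_left' diff_add_cancel norm_triangle_ineq4 vector_minus_component)
    moreover have "norm (d$j) \<le> norm eps / \<beta>" using Finite_Cartesian_Product.norm_nth_le[where x=d and i=j] dle by simp
    moreover have "norm (x0$j) > (1 + 1 / \<beta>) * norm eps"
      using big that by (simp add: S_def \<beta>_def K_def)
    moreover have "(1 + 1 / \<beta>) * norm eps = norm eps + norm eps / \<beta>" by (simp add: algebra_simps)
    ultimately show ?thesis by linarith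
  qed
  have suppx': "supp x' = S"
  proof
    show "supp x' \<subseteq> S" using x'o by (auto simp: supp_def)
    show "S \<subseteq> supp x'" using bigS by (auto simp: supp_def) (metis norm_ge_zero norm_zero not_less)
  qed
  have slm: "strict_local_min (KKreg K A b) x'"
  proof -
    define N where "N = CARD('n)"
    define f where "f j = norm (x'$j)" for j
    define m0 where "m0 = Min (f ` S)"
    have m0le: "m0 \<le> norm (x'$j)" if "j \<in> S" for j
      using that unfolding m0_def by (intro Min_le) (auto simp: f_def)
    have "m0 \<in> f ` S" unfolding m0_def using Sne by (intro Min_in) auto
    then have m0gt: "m0 > norm eps" using bigS by (auto simp: f_def)
    define c0 where "c0 = m0 - norm eps"
    have c0pos: "c0 > 0" using m0gt by (simp add: c0_def)
    have c0m0: "c0 \<le> m0" by (simp add: c0_def)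
    define \<delta> where "\<delta> = c0 / (3 * real N + 3)"
    have \<delta>pos: "\<delta> > 0" using c0pos by (simp add: \<delta>_def)
    have \<delta>3: "(3 * real N + 3) * \<delta> = c0" by (simp add: \<delta>_def)
    have \<delta>m0: "2 * \<delta> \<le> m0"
    proof -
      have "3 * \<delta> \<le> (3 * real N + 3) * \<delta>" using \<delta>pos by (intro mult_right_mono) auto
      then show ?thesis using \<delta>3 c0m0 \<delta>pos by linarith
    qed
    have Q2x': "Q2 K x' \<le> 0"
    proof -
      have z: "(\<Sum>j\<in>-S. norm (x'$j)) = 0" by (simp add: x'o)
      show ?thesis
        by (rule Q2_bounds(2)[where y=x' and S=S and \<mu>=0 and \<tau>=0]) (use K1 in \<open>auto simp: x'o K_def z\<close>)
    qed
    show ?thesis unfolding strict_local_min_def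
    proof (intro exI[of _ \<delta>] conjI allI impI)
      show "\<delta> > 0" by (rule \<delta>pos)
      fix y assume yass: "y \<noteq> x' \<and> dist y x' < \<delta>"
      define h where "h = y - x'"
      have hnz: "h \<noteq> 0" using yass by (simp add: h_def)
      have hlt: "norm h < \<delta>" using yass by (simp add: h_def dist_norm)
      have hj: "norm (h$j) < \<delta>" for j
        using Finite_Cartesian_Product.norm_nth_le[where x=h and i=j] hlt by linarith
      have yh: "y = x' + h" by (simp add: h_def)
      have yS: "m0 - \<delta> \<le> norm (y$j)" if "j \<in> S" for j
      proof -
        have "norm (x'$j) \<le> norm (y$j) + norm (h$j)"
          by (metis yh add_diff_cancel_right' norm_triangle_ineq4 vector_add_component)
        then show ?thesis using m0le[OF that] hj[of j] by linarith
      qed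
      have yC: "y$j = h$j" if "j \<notin> S" for j using that by (simp add: yh x'o)
      define T where "T = (\<Sum>j\<in>-S. norm (y$j))"
      have T0: "T \<ge> 0" by (simp add: T_def sum_nonneg)
      have TN: "T \<le> real N * \<delta>"
      proof -
        have "T \<le> (\<Sum>j\<in>-S. \<delta>)" unfolding T_def using hj yC by (intro sum_mono) (simp add: less_imp_le)
        also have "\<dots> = real (card (-S)) * \<delta>" by simp
        also have "\<dots> \<le> real N * \<delta>" using \<delta>pos
          by (intro mult_right_mono) (auto simp: N_def card_mono)
        finally show ?thesis .
      qed
      have Q2y: "Q2 K y \<ge> T * (2 * (m0 - \<delta>) - T - \<delta>)"
        unfolding T_def
      proof (rule Q2_bounds(1)[where y=y and S=S])
        show "norm (y$j) \<le> norm (y$i)" if "i \<in> S" "j \<notin> S" for i j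
        proof -
          have "norm (y$j) < \<delta>" using yC[OF that(2)] hj[of j] by simp
          then show ?thesis using yS[OF that(1)] \<delta>m0 by linarith
        qed
        show "K = card S" by (simp add: K_def)
        show "1 \<le> K" by (rule K1)
        show "m0 - \<delta> \<le> norm (y$i)" if "i \<in> S" for i using yS[OF that] .
        show "norm (y$j) \<le> \<delta>" if "j \<notin> S" for j using yC[OF that] hj[of j] by simp
      qed
      define hS where "hS = (\<chi> j. if j \<in> S then h$j else 0)"
      define hC where "hC = (\<chi> j. if j \<in> S then 0 else h$j)"
      have hsum: "h = hS + hC" by (simp add: hS_def hC_def vec_eq_iff)
      define u where "u = A *v hS"
      define v where "v = A *v hC"
      have vle: "norm v \<le> T"
      proof -
        have "norm v \<le> (\<Sum>j\<in>UNIV. norm (hC$j))" unfolding v_def by (rule norm_mat_vec_le[OF col])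
        also have "(\<Sum>j\<in>UNIV. norm (hC$j)) = (\<Sum>j\<in>-S. norm (h$j))"
          by (simp add: hC_def if_distrib[of norm] sum.If_cases Compl_eq)
        also have "\<dots> = T" unfolding T_def by (intro sum.cong) (auto simp: yC)
        finally show ?thesis .
      qed
      have ule: "norm u \<le> real N * \<delta>"
      proof -
        have "norm u \<le> (\<Sum>j\<in>UNIV. norm (hS$j))" unfolding u_def by (rule norm_mat_vec_le[OF col])
        also have "\<dots> \<le> (\<Sum>j\<in>(UNIV::'n set). \<delta>)"
        proof (rule sum_mono)
          fix j :: 'n
          show "norm (hS$j) \<le> \<delta>" using hj[of j] \<delta>pos by (simp add: hS_def less_imp_le)
        qed
        finally show ?thesis by (simp add: N_def)
      qed
      have Ay: "A *v y - b = (r + u) + v"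
        by (simp add: yh hsum r_def u_def v_def matrix_vector_right_distrib)
      have "ip u r = 0" unfolding u_def by (rule orth) (simp add: hS_def)
      then have "ip r u = 0" using ip_swap[of r u] by simp
      then have pyt: "(norm (r + u))^2 = (norm r)^2 + (norm u)^2" by (rule pythag)
      have tri: "norm (r + u) \<le> norm (r + u + v) + norm v"
        using norm_triangle_ineq4[of "r + u + v" v] by simp
      have sq: "(norm (r + u))^2 - 2 * norm (r + u) * norm v \<le> (norm (r + u + v))^2"
        by (rule sq_bound_aux) (use tri in auto)
      have rule: "norm (r + u) \<le> norm eps + real N * \<delta>"
        using norm_triangle_ineq[of r u] rle ule by linarith
      have prod: "norm (r + u) * norm v \<le> (norm eps + real N * \<delta>) * T"
        by (rule mult_mono) (use rule vle T0 \<delta>pos in auto)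
      have resid: "(norm (A *v y - b))^2 \<ge> (norm r)^2 + (norm u)^2 - 2 * (norm eps + real N * \<delta>) * T"
      proof -
        have "2 * norm (r + u) * norm v \<le> 2 * (norm eps + real N * \<delta>) * T" using prod by linarith
        then show ?thesis unfolding Ay using sq pyt by linarith
      qed
      have KKy: "KKreg K A b y = Q2 K y + (norm (A *v y - b))^2" by (simp add: KKreg_def)
      have KKx: "KKreg K A b x' \<le> (norm r)^2" using Q2x' by (simp add: KKreg_def r_def)
      have m1: "T * (2 * (m0 - \<delta>) - T - \<delta>) \<ge> T * (2 * (m0 - \<delta>) - real N * \<delta> - \<delta>)"
        using T0 TN by (intro mult_left_mono) auto
      have lin: "2 * (m0 - \<delta>) - real N * \<delta> - \<delta> - 2 * (norm eps + real N * \<delta>) = c0"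
        using \<delta>3 unfolding c0_def by (simp add: algebra_simps)
      have "T * (2 * (m0 - \<delta>) - real N * \<delta> - \<delta>) - 2 * (norm eps + real N * \<delta>) * T = T * c0"
        unfolding lin[symmetric] by (simp add: algebra_simps)
      then have main_ineq: "KKreg K A b y - KKreg K A b x' \<ge> T * c0 + (norm u)^2"
        using KKy KKx Q2y resid m1 by linarith
      show "KKreg K A b x' < KKreg K A b y"
      proof (cases "T > 0")
        case True
        then have "T * c0 > 0" using c0pos by simp
        then show ?thesis using main_ineq zero_le_power2[of "norm u"] by linarith
      next
        case False
        then have "T = 0" using T0 by simp
        then have "\<forall>j\<in>-S. norm (y$j) = 0" unfolding T_def
          by (subst sum_nonneg_eq_0_iff[symmetric]) auto
        then have "hC = 0" by (auto simp: hC_def vec_eq_iff yC)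
        then have hhS: "h = hS" using hsum by simp
        have "\<beta> * norm h \<le> norm (A *v h)" by (rule beta_le[OF hnz]) (simp add: hhS hS_def)
        moreover have "\<beta> * norm h > 0" using bpos' hnz by simp
        ultimately have "norm (A *v h) > 0" by linarith
        then have "norm u > 0" using hhS u_def by simp
        then have "(norm u)^2 > 0" by simp
        moreover have "T * c0 = 0" using \<open>T = 0\<close> by simp
        ultimately show ?thesis using main_ineq by linarith
      qed
    qed
  qed
  show ?thesis
    unfolding Let_def S_def[symmetric] K_def[symmetric] b_def[symmetric] x'_def[symmetric] \<beta>_def[symmetric]
    using slm suppx' bigS rle dle by (simp add: r_def S_def d_def)
qed

end

lemma cjl_real: "cjl (id :: real \<Rightarrow> real)"
  by unfold_locales (auto simp: power2_eq_square)

lemma cjl_complex: "cjl cnj"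
proof
  fix x :: complex
  show "cnj x * x = of_real ((norm x)^2)" by (metis complex_norm_square mult.commute)
qed simp_all

theorem proposition5p6:
  shows "(\<forall>(A::real^'n^'m) (x0::real^'n) (eps::real^'m).
      col_inf_norm_le1 A \<longrightarrow> x0 \<noteq> 0 \<longrightarrow> beta A (card (supp x0)) > 0 \<longrightarrow>
      (\<forall>j\<in>supp x0. norm (x0 $ j) > (1 + 1 / beta A (card (supp x0))) * norm eps) \<longrightarrow>
      (let S = supp x0; K = card S; b = A *v x0 + eps; x' = oracle_sol id A S b in
        strict_local_min (KKreg K A b) x' \<and> supp x' = supp x0 \<and>
        (\<forall>j\<in>S. norm (x' $ j) > norm eps) \<and>
        norm (A *v x' - b) \<le> norm eps \<and>
        norm (x' - x0) \<le> norm eps / beta A K)) \<and>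
    (\<forall>(A::complex^'n^'m) (x0::complex^'n) (eps::complex^'m).
      col_inf_norm_le1 A \<longrightarrow> x0 \<noteq> 0 \<longrightarrow> beta A (card (supp x0)) > 0 \<longrightarrow>
      (\<forall>j\<in>supp x0. norm (x0 $ j) > (1 + 1 / beta A (card (supp x0))) * norm eps) \<longrightarrow>
      (let S = supp x0; K = card S; b = A *v x0 + eps; x' = oracle_sol cnj A S b in
        strict_local_min (KKreg K A b) x' \<and> supp x' = supp x0 \<and>
        (\<forall>j\<in>S. norm (x' $ j) > norm eps) \<and>
        norm (A *v x' - b) \<le> norm eps \<and>
        norm (x' - x0) \<le> norm eps / beta A K))"
  proof (intro conjI allI impI)
  fix A :: "real^'n^'m" and x0 :: "real^'n" and eps :: "real^'m"
  assume "col_inf_norm_le1 A" "x0 \<noteq> 0" "beta A (card (supp x0)) > 0"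
    "\<forall>j\<in>supp x0. norm (x0 $ j) > (1 + 1 / beta A (card (supp x0))) * norm eps"
  then show "let S = supp x0; K = card S; b = A *v x0 + eps; x' = oracle_sol id A S b in
        strict_local_min (KKreg K A b) x' \<and> supp x' = supp x0 \<and>
        (\<forall>j\<in>S. norm (x' $ j) > norm eps) \<and>
        norm (A *v x' - b) \<le> norm eps \<and>
        norm (x' - x0) \<le> norm eps / beta A K"
    by (rule cjl.main[OF cjl_real])
next
  fix A :: "complex^'n^'m" and x0 :: "complex^'n" and eps :: "complex^'m"
  assume "col_inf_norm_le1 A" "x0 \<noteq> 0" "beta A (card (supp x0)) > 0"
    "\<forall>j\<in>supp x0. norm (x0 $ j) > (1 + 1 / beta A (card (supp x0))) * norm eps"
  then show "let S = supp x0; K = card S; b = A *v x0 + eps; x' = oracle_sol cnj A S b in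
        strict_local_min (KKreg K A b) x' \<and> supp x' = supp x0 \<and>
        (\<forall>j\<in>S. norm (x' $ j) > norm eps) \<and>
        norm (A *v x' - b) \<le> norm eps \<and>
        norm (x' - x0) \<le> norm eps / beta A K"
    by (rule cjl.main[OF cjl_complex])
qed

end
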